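(* Let $W$ be a (1-safe) DAW-net and $\mathrm{bc}(W)$ its $\mathcal{BC}$ encoding. For any $\ell\ge0$, if $X$ is a stable model of $P_\ell(\mathrm{bc}(W))$, then $$\rho=\Phi^-_0(X)\xrightarrow{\tau_0(X)}\Phi^-_1(X)\xrightarrow{\tau_1(X)}\cdots\xrightarrow{\tau_{\ell-1}(X)}\Phi^-_\ell(X)$$ is a sequence of valid firings of $W$ of length $\ell$.
   Context: **DAW-nets.** Data model $\mathcal{D}=(\mathcal{V},\Delta,\mathrm{dm},\mathrm{ord})$: variables; finite domains via total surjective $\mathrm{dm}$; partial orders $\le_{\Delta_i}$ on some domains. Assignments: partial $\eta$ with $\eta(v)\in\mathrm{dm}(v)$. Guards $\Phi::=\mathit{true}\mid\mathrm{def}(v)\mid t_1=t_2\mid t_1\le t_2\mid\neg\Phi\mid\Phi\wedge\Phi$; with $t[\eta]=\eta(t)$ for variables on which $\eta$ is defined and $t$ otherwise: $\mathrm{def}(v)$ iff $\eta(v)$ defined; $t_1=t_2$ iff $t_1[\eta],t_2[\eta]$ are equal constants; $t_1\le t_2$ iff both lie in some ordered $\Delta_i$ and $t_1[\eta]\le_{\Delta_i}t_2[\eta]$. A DAW-net $W=\langle\mathcal{D},(P,T,F),\mathrm{wr},\mathrm{gd}\rangle$: workflow Petri net with places $\mathit{start},\mathit{sink}$ (presets ${}^\bullet t$, postsets $t^\bullet$), partial functions $\mathrm{wr}(t)$ with $\mathrm{wr}(t)(v)\subseteq\mathrm{dm}(v)$, guards $\mathrm{gd}(t)$. A firing $(M,\eta)\xrightarrow{t}(M',\eta')$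 is valid iff $\{p\mid M(p)>0\}\supseteq{}^\bullet t$; $\mathcal{D},\eta\models\mathrm{gd}(t)$; $M'(p)=M(p)-1$ on ${}^\bullet t\setminus t^\bullet$, $M(p)+1$ on $t^\bullet\setminus{}^\bullet t$, else $M(p)$; $\mathrm{dom}(\eta')=\mathrm{dom}(\eta)\cup\{v\mid\mathrm{wr}(t)(v)\ne\emptyset\}\setminus\{v\mid\mathrm{wr}(t)(v)=\emptyset\}$, $\eta'(v)\in\mathrm{wr}(t)(v)$ for $v\in\mathrm{dom}(\mathrm{wr}(t))$, else $\eta'(v)=\eta(v)$. $\mathcal{V}'$: finite set of variables of $W$; $\mathrm{adm}(v)=\bigcup_t\mathrm{wr}(t)(v)$. $W$ is assumed 1-safe. **$\mathcal{BC}$ semantics.** Laws: dynamic "$A_0$ after $A'_1,\dots,A'_n$ ifcons $A_{n+1},\dots,A_m$", static "$A_0$ if ... ifcons ...", "initially $f=v$". $P_\ell(B)$ is the disjunctive program (classical $\neg$, default $\sim$) containing: static laws as $i{:}A_0\leftarrow i{:}A_1,\dots,i{:}A_n,\sim\neg(i{:}A_{n+1}),\dots,\sim\neg(i{:}A_m)$, $0\le i\le\ell$; dynamic laws as $i{+}1{:}A_0\leftarrow i{:}A'_1,\dots,i{:}A'_n,\sim\neg(i{+}1{:}A_{n+1}),\dots,\sim\neg(i{+}1{:}A_m)$, $0\le i<\ell$ (constraints if $A_0$ is false); facts $0{:}f=v$ for "initially $f=v$"; $0{:}f=v\vee\neg(0{:}f=v)$; $i{:}a\vee\neg(i{:}a)$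 for action constants, $i<\ell$; for $i\le\ell$ and fluent $f$ with domain $v_1,\dots,v_k$: $\leftarrow\sim(i{:}f=v_1),\dots,\sim(i{:}f=v_k)$ and $\neg(i{:}f=v)\leftarrow i{:}f=w$ ($v\neq w$). $\sigma_i(X)=\{f\mapsto o\mid(i{:}f=o)\in X\}$. **The encoding $\mathrm{bc}(W)$.** Fluents $v\in\mathcal{V}'$ (domain $\mathrm{adm}(v)\cup\{\mathrm{null}\}$), Boolean fluents $p\in P$ and $\mathit{trans}$; action constants $t\in T$. Laws: "$v=o$ after $v=o$ ifcons $v=o$"; "$p=o$ after $p=o$ ifcons $p=o$"; for each $t$: "$p=\mathrm{false}$ after $t$" ($p\in{}^\bullet t\setminus t^\bullet$), "$p=\mathrm{true}$ after $t$" ($p\in t^\bullet\setminus{}^\bullet t$), "$v=d$ after $t$ ifcons $v=d$" ($d\in\mathrm{wr}(t)(v)$), "$v=\mathrm{null}$ after $t$" ($\mathrm{wr}(t)(v)=\emptyset$), "false after $t$ ifcons $v=d$" ($\mathrm{wr}(t)(v)\ne\emptyset$, $d\in\{\mathrm{null}\}\cup\mathrm{adm}(v)\setminus\mathrm{wr}(t)(v)$), "false after $t,s$" ($t\neq s$), "false after $t,p=\mathrm{false}$" ($p\in{}^\bullet t$), "$\mathit{trans}=\mathrm{true}$ after $t$"; "initially $\mathit{start}=\mathrm{true}$", "initially $p=\mathrm{false}$" ($p\ne\mathit{start}$), "initially $v=\mathrm{null}$", "initially $\mathit{trans}=\mathrm{true}$"; and for each $t$ with $\mathrm{gd}(t)\not\equiv\mathit{true}$,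 for a chosen formula $\bigvee_k t^k_1\wedge\dots\wedge t^k_{n_k}$ equivalent to $\neg\mathrm{gd}(t)$ with terms $v=o$ or $\neg\mathrm{def}(v)$, the laws "false after $t,[\![t^k_1]\!],\dots,[\![t^k_{n_k}]\!]$", with $[\![v=o]\!]=(v=o)$, $[\![\neg\mathrm{def}(v)]\!]=(v=\mathrm{null})$. **Inverse mapping.** For a stable model $X$ of $P_\ell(\mathrm{bc}(W))$ and $0\le i\le\ell$, $\Phi^-_i(X)=(M_i,\eta_i)$ with $M_i(p)=1$ if $\sigma_i(X)(p)=\mathrm{true}$ and $M_i(p)=0$ if $\sigma_i(X)(p)=\mathrm{false}$ ($p\in P$), and $\eta_i=\{(v,o)\mid v\in\mathcal{V}',\sigma_i(X)(v)=o,o\ne\mathrm{null}\}$; for $0\le i<\ell$, $\tau_i(X)$ is the action constant $a$ with $(i{:}a)\in X$. *)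

theory Defs
  imports Main
begin

section \<open>DAW-nets\<close>

text \<open>Data model (V, Delta, dm, ord). Domains are sets of constants of type 'd;
  ord gives (partially) the partial orders on some of the domains.\<close>
record ('v,'d) datamodel =
  DV    :: "'v set"
  Delta :: "'d set set"
  dm    :: "'v \<Rightarrow> 'd set"
  ord   :: "'d set \<Rightarrow> ('d \<times> 'd) set option"

definition wf_datamodel :: "('v,'d) datamodel \<Rightarrow> bool" where
  "wf_datamodel D \<longleftrightarrow>
     (\<forall>v\<in>DV D. dm D v \<in> Delta D) \<and> Delta D \<subseteq> dm D ` DV D \<and>
     (\<forall>X\<in>Delta D. finite X) \<and>
     (\<forall>X R. ord D X = Some R \<longrightarrow> X \<in> Delta D \<and> partial_order_on X R)"

datatype ('v,'d) gterm = Var 'v | Const 'd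

datatype ('v,'d) guard =
    GTrue
  | GDef 'v
  | GEq "('v,'d) gterm" "('v,'d) gterm"
  | GLeq "('v,'d) gterm" "('v,'d) gterm"
  | GNot "('v,'d) guard"
  | GAnd "('v,'d) guard" "('v,'d) guard"

type_synonym ('v,'d) assignment = "'v \<Rightarrow> 'd option"

fun tsubst :: "('v,'d) assignment \<Rightarrow> ('v,'d) gterm \<Rightarrow> ('v,'d) gterm" where
  "tsubst \<eta> (Var v) = (case \<eta> v of Some c \<Rightarrow> Const c | None \<Rightarrow> Var v)"
| "tsubst \<eta> (Const c) = Const c"

fun holds :: "('v,'d) datamodel \<Rightarrow> ('v,'d) assignment \<Rightarrow> ('v,'d) guard \<Rightarrow> bool" where
  "holds D \<eta> GTrue = True"
| "holds D \<eta> (GDef v) = (\<eta> v \<noteq> None)"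
| "holds D \<eta> (GEq t1 t2) =
     (\<exists>c. tsubst \<eta> t1 = Const c \<and> tsubst \<eta> t2 = Const c)"
| "holds D \<eta> (GLeq t1 t2) =
     (\<exists>c1 c2 X R. tsubst \<eta> t1 = Const c1 \<and> tsubst \<eta> t2 = Const c2 \<and>
        X \<in> Delta D \<and> ord D X = Some R \<and> c1 \<in> X \<and> c2 \<in> X \<and> (c1, c2) \<in> R)"
| "holds D \<eta> (GNot g) = (\<not> holds D \<eta> g)"
| "holds D \<eta> (GAnd g1 g2) = (holds D \<eta> g1 \<and> holds D \<eta> g2)"

fun gvars :: "('v,'d) guard \<Rightarrow> 'v set" where
  "gvars GTrue = {}"
| "gvars (GDef v) = {v}"
| "gvars (GEq t1 t2) = {v. Var v = t1 \<or> Var v = t2}"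
| "gvars (GLeq t1 t2) = {v. Var v = t1 \<or> Var v = t2}"
| "gvars (GNot g) = gvars g"
| "gvars (GAnd g1 g2) = gvars g1 \<union> gvars g2"

definition is_assignment :: "('v,'d) datamodel \<Rightarrow> ('v,'d) assignment \<Rightarrow> bool" where
  "is_assignment D \<eta> \<longleftrightarrow> dom \<eta> \<subseteq> DV D \<and> (\<forall>v c. \<eta> v = Some c \<longrightarrow> c \<in> dm D v)"

text \<open>A DAW-net: the flow relation F is split into arcs place->transition (FIn)
  and transition->place (FOut); wr t is a partial function from variables to sets
  of values.\<close>
record ('v,'d,'p,'t) dawnet =
  dmod   :: "('v,'d) datamodel"
  places :: "'p set"
  trans  :: "'t set"
  FIn    :: "('p \<times> 't) set"
  FOut   :: "('t \<times> 'p) set"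
  start  :: 'p
  sink   :: 'p
  wr     :: "'t \<Rightarrow> 'v \<Rightarrow> 'd set option"
  gd     :: "'t \<Rightarrow> ('v,'d) guard"

definition preset :: "('v,'d,'p,'t) dawnet \<Rightarrow> 't \<Rightarrow> 'p set" where
  "preset W t = {p. (p, t) \<in> FIn W}"

definition postset :: "('v,'d,'p,'t) dawnet \<Rightarrow> 't \<Rightarrow> 'p set" where
  "postset W t = {p. (t, p) \<in> FOut W}"

definition flow_graph :: "('v,'d,'p,'t) dawnet \<Rightarrow> ('p + 't) rel" where
  "flow_graph W = {(Inl p, Inr t) | p t. (p, t) \<in> FIn W} \<union> {(Inr t, Inl p) | t p. (t, p) \<in> FOut W}"

definition wf_dawnet :: "('v,'d,'p,'t) dawnet \<Rightarrow> bool" where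
  "wf_dawnet W \<longleftrightarrow>
     wf_datamodel (dmod W) \<and> finite (places W) \<and> finite (trans W) \<and>
     FIn W \<subseteq> places W \<times> trans W \<and> FOut W \<subseteq> trans W \<times> places W \<and>
     start W \<in> places W \<and> sink W \<in> places W \<and>
     (\<forall>t. (t, start W) \<notin> FOut W) \<and> (\<forall>t. (sink W, t) \<notin> FIn W) \<and>
     (\<forall>x \<in> Inl ` places W \<union> Inr ` trans W.
        (Inl (start W), x) \<in> (flow_graph W)\<^sup>* \<and> (x, Inl (sink W)) \<in> (flow_graph W)\<^sup>*) \<and>
     (\<forall>t\<in>trans W. dom (wr W t) \<subseteq> DV (dmod W) \<and>
        (\<forall>v S. wr W t v = Some S \<longrightarrow> S \<subseteq> dm (dmod W) v) \<and>
        gvars (gd W t) \<subseteq> DV (dmod W))"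

type_synonym 'p marking = "'p \<Rightarrow> nat"

definition valid_firing ::
  "('v,'d,'p,'t) dawnet \<Rightarrow> 'p marking \<times> ('v,'d) assignment \<Rightarrow> 't
     \<Rightarrow> 'p marking \<times> ('v,'d) assignment \<Rightarrow> bool" where
  "valid_firing W C t C' \<longleftrightarrow>
     (case C of (M, \<eta>) \<Rightarrow> case C' of (M', \<eta>') \<Rightarrow>
       t \<in> trans W \<and>
       preset W t \<subseteq> {p. M p > 0} \<and>
       holds (dmod W) \<eta> (gd W t) \<and>
       (\<forall>p\<in>places W.
          M' p = (if p \<in> preset W t - postset W t then M p - 1
                  else if p \<in> postset W t - preset W t then M p + 1
                  else M p)) \<and>
       dom \<eta>' = (dom \<eta> \<union> {v. \<exists>S. wr W t v = Some S \<and> S \<noteq> {}}) - {v. wr W t v = Some {}} \<and>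
       (\<forall>v S. wr W t v = Some S \<and> S \<noteq> {} \<longrightarrow> (\<exists>d\<in>S. \<eta>' v = Some d)) \<and>
       (\<forall>v. wr W t v = None \<longrightarrow> \<eta>' v = \<eta> v))"

definition initial_config :: "('v,'d,'p,'t) dawnet \<Rightarrow> 'p marking \<times> ('v,'d) assignment" where
  "initial_config W = ((\<lambda>p. if p = start W then 1 else 0), Map.empty)"

inductive reachable :: "('v,'d,'p,'t) dawnet \<Rightarrow> 'p marking \<times> ('v,'d) assignment \<Rightarrow> bool"
  for W where
  init: "reachable W (initial_config W)"
| step: "reachable W C \<Longrightarrow> valid_firing W C t C' \<Longrightarrow> reachable W C'"

definition one_safe :: "('v,'d,'p,'t) dawnet \<Rightarrow> bool" where
  "one_safe W \<longleftrightarrow> (\<forall>M \<eta>. reachable W (M, \<eta>) \<longrightarrow> (\<forall>p\<in>places W. M p \<le> 1))"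

definition vars_of :: "('v,'d,'p,'t) dawnet \<Rightarrow> 'v set" where
  "vars_of W = (\<Union>t\<in>trans W. dom (wr W t) \<union> gvars (gd W t))"

definition adm :: "('v,'d,'p,'t) dawnet \<Rightarrow> 'v \<Rightarrow> 'd set" where
  "adm W v = (\<Union>t\<in>trans W. case wr W t v of Some S \<Rightarrow> S | None \<Rightarrow> {})"

section \<open>Disjunctive logic programs with classical and default negation\<close>

datatype 'a lit = Pos 'a | NegC 'a

text \<open>A rule: head (disjunction of literals; empty = constraint),
  positive body, and default-negated body (~L).\<close>
record 'a rule =
  rhead :: "'a lit set"
  rpos  :: "'a lit set"
  rnaf  :: "'a lit set"

definition consistent :: "'a lit set \<Rightarrow> bool" where
  "consistent X \<longleftrightarrow> (\<forall>a. \<not> (Pos a \<in> X \<and> NegC a \<in> X))"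

definition closed_under_reduct :: "'a rule set \<Rightarrow> 'a lit set \<Rightarrow> 'a lit set \<Rightarrow> bool" where
  "closed_under_reduct P X Y \<longleftrightarrow>
     (\<forall>r\<in>P. rnaf r \<inter> X = {} \<longrightarrow> rpos r \<subseteq> Y \<longrightarrow> rhead r \<inter> Y \<noteq> {})"

definition stable_model :: "'a rule set \<Rightarrow> 'a lit set \<Rightarrow> bool" where
  "stable_model P X \<longleftrightarrow> consistent X \<and> closed_under_reduct P X X \<and>
     (\<forall>Y. Y \<subseteq> X \<longrightarrow> closed_under_reduct P X Y \<longrightarrow> Y = X)"

section \<open>The action language BC and its translation P_l\<close>

text \<open>Atoms: f = v for a fluent constant f, or an (Boolean) action constant a.\<close>
datatype ('f,'val,'c) bcatom = FA 'f 'val | AA 'c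

text \<open>Laws; head None stands for false.\<close>
datatype ('f,'val,'c) bclaw =
    Static "('f,'val,'c) bcatom option" "('f,'val,'c) bcatom list" "('f,'val,'c) bcatom list"
  | Dynamic "('f,'val,'c) bcatom option" "('f,'val,'c) bcatom list" "('f,'val,'c) bcatom list"
  | Initially 'f 'val

type_synonym ('f,'val,'c) tatom = "nat \<times> ('f,'val,'c) bcatom"

fun law_rules :: "nat \<Rightarrow> ('f,'val,'c) bclaw \<Rightarrow> ('f,'val,'c) tatom rule set" where
  "law_rules l (Static h as bs) =
     {\<lparr> rhead = (case h of None \<Rightarrow> {} | Some a0 \<Rightarrow> {Pos (i, a0)}),
        rpos = (\<lambda>a. Pos (i, a)) ` set as,
        rnaf = (\<lambda>a. NegC (i, a)) ` set bs \<rparr> | i. i \<le> l}"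
| "law_rules l (Dynamic h as bs) =
     {\<lparr> rhead = (case h of None \<Rightarrow> {} | Some a0 \<Rightarrow> {Pos (Suc i, a0)}),
        rpos = (\<lambda>a. Pos (i, a)) ` set as,
        rnaf = (\<lambda>a. NegC (Suc i, a)) ` set bs \<rparr> | i. i < l}"
| "law_rules l (Initially f v) = {\<lparr> rhead = {Pos (0, FA f v)}, rpos = {}, rnaf = {} \<rparr>}"

definition P_l ::
  "nat \<Rightarrow> 'f set \<Rightarrow> ('f \<Rightarrow> 'val set) \<Rightarrow> 'c set \<Rightarrow> ('f,'val,'c) bclaw set
     \<Rightarrow> ('f,'val,'c) tatom rule set" where
  "P_l l Fl fdom Act B =
     (\<Union>L\<in>B. law_rules l L)
   \<union> {\<lparr> rhead = {Pos (0, FA f v), NegC (0, FA f v)}, rpos = {}, rnaf = {} \<rparr> | f v.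
        f \<in> Fl \<and> v \<in> fdom f}
   \<union> {\<lparr> rhead = {Pos (i, AA a), NegC (i, AA a)}, rpos = {}, rnaf = {} \<rparr> | i a.
        a \<in> Act \<and> i < l}
   \<union> {\<lparr> rhead = {}, rpos = {}, rnaf = (\<lambda>v. Pos (i, FA f v)) ` fdom f \<rparr> | i f.
        f \<in> Fl \<and> i \<le> l}
   \<union> {\<lparr> rhead = {NegC (i, FA f v)}, rpos = {Pos (i, FA f w)}, rnaf = {} \<rparr> | i f v w.
        f \<in> Fl \<and> v \<in> fdom f \<and> w \<in> fdom f \<and> v \<noteq> w \<and> i \<le> l}"

definition sigma :: "nat \<Rightarrow> ('f,'val,'c) tatom lit set \<Rightarrow> 'f \<Rightarrow> 'val" where
  "sigma i X f = (THE o'. Pos (i, FA f o') \<in> X)"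

section \<open>The encoding bc(W)\<close>

datatype ('v,'p) fluent = VarF 'v | PlaceF 'p | TransF
datatype 'd fval = DVal 'd | Null | BTrue | BFalse

definition bc_fluents :: "('v,'d,'p,'t) dawnet \<Rightarrow> ('v,'p) fluent set" where
  "bc_fluents W = VarF ` vars_of W \<union> PlaceF ` places W \<union> {TransF}"

fun bc_dom :: "('v,'d,'p,'t) dawnet \<Rightarrow> ('v,'p) fluent \<Rightarrow> 'd fval set" where
  "bc_dom W (VarF v) = DVal ` adm W v \<union> {Null}"
| "bc_dom W (PlaceF p) = {BTrue, BFalse}"
| "bc_dom W TransF = {BTrue, BFalse}"

text \<open>A term of a DNF disjunct: (v, Some o) stands for v = o, (v, None) for
  not def(v).\<close>
type_synonym ('v,'d) dnf_term = "'v \<times> 'd option"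

fun dnf_term_holds :: "('v,'d) assignment \<Rightarrow> ('v,'d) dnf_term \<Rightarrow> bool" where
  "dnf_term_holds \<eta> (v, Some o') = (\<eta> v = Some o')"
| "dnf_term_holds \<eta> (v, None) = (\<eta> v = None)"

fun enc_term :: "('v,'d) dnf_term \<Rightarrow> (('v,'p) fluent, 'd fval, 't) bcatom" where
  "enc_term (v, Some o') = FA (VarF v) (DVal o')"
| "enc_term (v, None) = FA (VarF v) Null"

definition guard_valid :: "('v,'d) datamodel \<Rightarrow> ('v,'d) guard \<Rightarrow> bool" where
  "guard_valid D g \<longleftrightarrow> (\<forall>\<eta>. is_assignment D \<eta> \<longrightarrow> holds D \<eta> g)"

definition admissible_dnf ::
  "('v,'d,'p,'t) dawnet \<Rightarrow> ('t \<Rightarrow> ('v,'d) dnf_term list list) \<Rightarrow> bool" where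
  "admissible_dnf W dnf \<longleftrightarrow>
     (\<forall>t\<in>trans W. \<not> guard_valid (dmod W) (gd W t) \<longrightarrow>
        (\<forall>c\<in>set (dnf t). \<forall>x\<in>set c. fst x \<in> vars_of W) \<and>
        (\<forall>\<eta>. is_assignment (dmod W) \<eta> \<longrightarrow>
           (\<not> holds (dmod W) \<eta> (gd W t) \<longleftrightarrow>
            (\<exists>c\<in>set (dnf t). \<forall>x\<in>set c. dnf_term_holds \<eta> x))))"

definition bc_laws ::
  "('v,'d,'p,'t) dawnet \<Rightarrow> ('t \<Rightarrow> ('v,'d) dnf_term list list)
     \<Rightarrow> (('v,'p) fluent, 'd fval, 't) bclaw set" where
  "bc_laws W dnf =
     {Dynamic (Some (FA (VarF v) o')) [FA (VarF v) o'] [FA (VarF v) o'] | v o'.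
        v \<in> vars_of W \<and> o' \<in> bc_dom W (VarF v)}
   \<union> {Dynamic (Some (FA (PlaceF p) o')) [FA (PlaceF p) o'] [FA (PlaceF p) o'] | p o'.
        p \<in> places W \<and> o' \<in> {BTrue, BFalse}}
   \<union> {Dynamic (Some (FA (PlaceF p) BFalse)) [AA t] [] | t p.
        t \<in> trans W \<and> p \<in> preset W t - postset W t}
   \<union> {Dynamic (Some (FA (PlaceF p) BTrue)) [AA t] [] | t p.
        t \<in> trans W \<and> p \<in> postset W t - preset W t}
   \<union> {Dynamic (Some (FA (VarF v) (DVal d))) [AA t] [FA (VarF v) (DVal d)] | t v d S.
        t \<in> trans W \<and> wr W t v = Some S \<and> d \<in> S}
   \<union> {Dynamic (Some (FA (VarF v) Null)) [AA t] [] | t v.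
        t \<in> trans W \<and> wr W t v = Some {}}
   \<union> {Dynamic None [AA t] [FA (VarF v) d] | t v d S.
        t \<in> trans W \<and> wr W t v = Some S \<and> S \<noteq> {} \<and>
        d \<in> {Null} \<union> DVal ` (adm W v - S)}
   \<union> {Dynamic None [AA t, AA s] [] | t s. t \<in> trans W \<and> s \<in> trans W \<and> t \<noteq> s}
   \<union> {Dynamic None [AA t, FA (PlaceF p) BFalse] [] | t p. t \<in> trans W \<and> p \<in> preset W t}
   \<union> {Dynamic (Some (FA TransF BTrue)) [AA t] [] | t. t \<in> trans W}
   \<union> {Initially (PlaceF (start W)) BTrue}
   \<union> {Initially (PlaceF p) BFalse | p. p \<in> places W \<and> p \<noteq> start W}
   \<union> {Initially (VarF v) Null | v. v \<in> vars_of W}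
   \<union> {Initially TransF BTrue}
   \<union> {Dynamic None (AA t # map enc_term c) [] | t c.
        t \<in> trans W \<and> \<not> guard_valid (dmod W) (gd W t) \<and> c \<in> set (dnf t)}"

definition P_bc ::
  "nat \<Rightarrow> ('v,'d,'p,'t) dawnet \<Rightarrow> ('t \<Rightarrow> ('v,'d) dnf_term list list)
     \<Rightarrow> ((('v,'p) fluent, 'd fval, 't) tatom) rule set" where
  "P_bc l W dnf = P_l l (bc_fluents W) (bc_dom W) (trans W) (bc_laws W dnf)"

definition Phi_inv ::
  "('v,'d,'p,'t) dawnet \<Rightarrow> ((('v,'p) fluent, 'd fval, 't) tatom) lit set \<Rightarrow> nat
     \<Rightarrow> 'p marking \<times> ('v,'d) assignment" where
  "Phi_inv W X i =
     ((\<lambda>p. if sigma i X (PlaceF p) = BTrue then 1 else 0),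
      (\<lambda>v. if v \<in> vars_of W then
              (case sigma i X (VarF v) of DVal d \<Rightarrow> Some d | _ \<Rightarrow> None)
            else None))"

definition tau :: "((('v,'p) fluent, 'd fval, 't) tatom) lit set \<Rightarrow> nat \<Rightarrow> 't" where
  "tau X i = (THE a. Pos (i, AA a) \<in> X)"

end

theory Submission
  imports Defs
begin


definition eff :: "('v,'d,'p,'t) dawnet \<Rightarrow> 't \<Rightarrow> ('v,'p) fluent \<Rightarrow> 'd fval \<Rightarrow> bool" where
  "eff W t f v \<longleftrightarrow>
    (\<exists>p. f = PlaceF p \<and> ((v = BFalse \<and> p \<in> preset W t - postset W t) \<or> (v = BTrue \<and> p \<in> postset W t - preset W t))) \<or>
    (\<exists>x S. f = VarF x \<and> wr W t x = Some S \<and> ((v = Null \<and> S = {}) \<or> (\<exists>d\<in>S. v = DVal d))) \<or>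
    (f = TransF \<and> v = BTrue)"

lemma heads_FA:
  assumes wf: "wf_dawnet W" and r: "r \<in> P_bc l W dnf" and h: "Pos (j, FA f v) \<in> rhead r"
  shows "f \<in> bc_fluents W \<and> v \<in> bc_dom W f \<and> j \<le> l \<and>
    (j = 0 \<or> (\<exists>i. j = Suc i \<and> ((f \<noteq> TransF \<and> rpos r = {Pos (i, FA f v)}) \<or>
        (\<exists>t. t \<in> trans W \<and> rpos r = {Pos (i, AA t)} \<and> eff W t f v))))"
proof -
  have pre: "p \<in> places W" if "t \<in> trans W" "p \<in> preset W t \<or> p \<in> postset W t" for t p
    using wf that unfolding wf_dawnet_def preset_def postset_def by auto
  have vo: "x \<in> vars_of W" if "t \<in> trans W" "wr W t x = Some S" for t x S
    using that unfolding vars_of_def by auto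
  have ad: "d \<in> adm W x" if "t \<in> trans W" "wr W t x = Some S" "d \<in> S" for t x S d
    using that unfolding adm_def by force
  have st: "start W \<in> places W" using wf unfolding wf_dawnet_def by auto
  show ?thesis
    using r h pre vo ad st
    unfolding P_bc_def P_l_def bc_laws_def
    by (auto simp: bc_fluents_def eff_def) (metis image_eqI) 
qed

lemma heads_AA:
  assumes r: "r \<in> P_bc l W dnf" and h: "Pos (j, AA a) \<in> rhead r"
  shows "a \<in> trans W \<and> j < l"
  using r h unfolding P_bc_def P_l_def bc_laws_def
  by (auto simp: bc_fluents_def)

lemma L1: "t \<in> trans W \<Longrightarrow> p \<in> preset W t \<Longrightarrow> Dynamic None [AA t, FA (PlaceF p) BFalse] [] \<in> bc_laws W dnf"
  by (simp add: bc_laws_def)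
lemma L2: "t \<in> trans W \<Longrightarrow> s \<in> trans W \<Longrightarrow> t \<noteq> s \<Longrightarrow> Dynamic None [AA t, AA s] [] \<in> bc_laws W dnf"
  by (simp add: bc_laws_def)
lemma L3: "t \<in> trans W \<Longrightarrow> p \<in> preset W t - postset W t \<Longrightarrow> Dynamic (Some (FA (PlaceF p) BFalse)) [AA t] [] \<in> bc_laws W dnf"
  by (simp add: bc_laws_def)
lemma L4: "t \<in> trans W \<Longrightarrow> p \<in> postset W t - preset W t \<Longrightarrow> Dynamic (Some (FA (PlaceF p) BTrue)) [AA t] [] \<in> bc_laws W dnf"
  by (simp add: bc_laws_def)
lemma L5: "t \<in> trans W \<Longrightarrow> wr W t v = Some {} \<Longrightarrow> Dynamic (Some (FA (VarF v) Null)) [AA t] [] \<in> bc_laws W dnf"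
  by (simp add: bc_laws_def)
lemma L6: "t \<in> trans W \<Longrightarrow> wr W t v = Some S \<Longrightarrow> S \<noteq> {} \<Longrightarrow> d \<in> {Null} \<union> DVal ` (adm W v - S) \<Longrightarrow> Dynamic None [AA t] [FA (VarF v) d] \<in> bc_laws W dnf"
  by (simp add: bc_laws_def)
lemma L7: "Initially (PlaceF (start W)) BTrue \<in> bc_laws W dnf"
  by (simp add: bc_laws_def)
lemma L8: "p \<in> places W \<Longrightarrow> p \<noteq> start W \<Longrightarrow> Initially (PlaceF p) BFalse \<in> bc_laws W dnf"
  by (simp add: bc_laws_def)
lemma L9: "v \<in> vars_of W \<Longrightarrow> Initially (VarF v) Null \<in> bc_laws W dnf"
  by (simp add: bc_laws_def)
lemma L10: "t \<in> trans W \<Longrightarrow> \<not> guard_valid (dmod W) (gd W t) \<Longrightarrow> c \<in> set (dnf t) \<Longrightarrow> Dynamic None (AA t # map enc_term c) [] \<in> bc_laws W dnf"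
  by (simp add: bc_laws_def) blast
lemma R1: "f \<in> Fl \<Longrightarrow> i \<le> l \<Longrightarrow> \<lparr>rhead = {}, rpos = {}, rnaf = (\<lambda>v. Pos (i, FA f v)) ` fdom f\<rparr> \<in> P_l l Fl fdom Act B"
  by (simp add: P_l_def) blast
lemma R2: "f \<in> Fl \<Longrightarrow> i \<le> l \<Longrightarrow> v \<in> fdom f \<Longrightarrow> w \<in> fdom f \<Longrightarrow> v \<noteq> w \<Longrightarrow> \<lparr>rhead = {NegC (i, FA f v)}, rpos = {Pos (i, FA f w)}, rnaf = {}\<rparr> \<in> P_l l Fl fdom Act B"
  by (simp add: P_l_def)

definition nm :: "('v,'d,'p,'t) dawnet \<Rightarrow> 'p marking \<Rightarrow> 'p marking" where
  "nm W M = (\<lambda>p. if p \<in> places W then M p else 0)"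

definition nextM :: "('v,'d,'p,'t) dawnet \<Rightarrow> 't \<Rightarrow> 'p marking \<Rightarrow> 'p marking" where
  "nextM W t M = (\<lambda>p. if p \<in> preset W t - postset W t then M p - 1
                  else if p \<in> postset W t - preset W t then M p + 1 else M p)"

lemma vf_cong:
  assumes wf: "wf_dawnet W" and v: "valid_firing W (M1, e) t (M1', e')"
    and eq: "\<forall>p\<in>places W. M1 p = M2 p \<and> M1' p = M2' p"
  shows "valid_firing W (M2, e) t (M2', e')"
proof -
  have "preset W t \<subseteq> places W" using wf unfolding wf_dawnet_def preset_def by auto
  then show ?thesis using v eq unfolding valid_firing_def by (auto simp: subset_iff)
qed

locale SM =
  fixes W :: "('v,'d,'p,'t) dawnet" and dnf :: "'t \<Rightarrow> ('v,'d) dnf_term list list"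
    and l :: nat and X :: "((('v,'p) fluent, 'd fval, 't) tatom) lit set"
  assumes wf: "wf_dawnet W" and os: "one_safe W" and admd: "admissible_dnf W dnf"
    and sm: "stable_model (P_bc l W dnf) X"
begin

lemma cons: "\<not> (Pos a \<in> X \<and> NegC a \<in> X)"
  using sm unfolding stable_model_def consistent_def by blast

lemma closed: "r \<in> P_bc l W dnf \<Longrightarrow> rnaf r \<inter> X = {} \<Longrightarrow> rpos r \<subseteq> X \<Longrightarrow> rhead r \<inter> X \<noteq> {}"
  using sm unfolding stable_model_def closed_under_reduct_def by blast

lemma support:
  assumes "L \<in> X" shows "\<exists>r\<in>P_bc l W dnf. rnaf r \<inter> X = {} \<and> rpos r \<subseteq> X \<and> L \<in> rhead r"
proof (rule ccontr)
  assume nc: "\<not> ?thesis"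
  have "closed_under_reduct (P_bc l W dnf) X (X - {L})"
    unfolding closed_under_reduct_def
  proof (intro ballI impI)
    fix r assume r: "r \<in> P_bc l W dnf" "rnaf r \<inter> X = {}" "rpos r \<subseteq> X - {L}"
    then have "rhead r \<inter> X \<noteq> {}" using closed by blast
    moreover have "L \<notin> rhead r" using nc r by blast
    ultimately show "rhead r \<inter> (X - {L}) \<noteq> {}" by blast
  qed
  then have "X - {L} = X" using sm unfolding stable_model_def by blast
  with assms show False by blast
qed

lemma law_in_P: "L \<in> bc_laws W dnf \<Longrightarrow> r \<in> law_rules l L \<Longrightarrow> r \<in> P_bc l W dnf"
  unfolding P_bc_def P_l_def by blast

lemma dyn_fire:
  assumes "Dynamic h as bs \<in> bc_laws W dnf" "i < l" "\<forall>a\<in>set as. Pos (i,a) \<in> X"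
    "\<forall>b\<in>set bs. NegC (Suc i, b) \<notin> X"
  shows "\<exists>a0. h = Some a0 \<and> Pos (Suc i, a0) \<in> X"
proof -
  let ?r = "\<lparr>rhead = (case h of None \<Rightarrow> {} | Some a0 \<Rightarrow> {Pos (Suc i, a0)}),
     rpos = (\<lambda>a. Pos (i, a)) ` set as, rnaf = (\<lambda>a. NegC (Suc i, a)) ` set bs\<rparr>"
  have "?r \<in> law_rules l (Dynamic h as bs)" using assms(2) by auto
  then have rP: "?r \<in> P_bc l W dnf" using law_in_P[OF assms(1)] by blast
  have "rhead ?r \<inter> X \<noteq> {}" using closed[OF rP] assms(3,4) by auto
  then show ?thesis by (cases h) auto
qed

lemma dyn_constraint:
  assumes "Dynamic None as bs \<in> bc_laws W dnf" "i < l" "\<forall>a\<in>set as. Pos (i,a) \<in> X"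
  shows "\<exists>b\<in>set bs. NegC (Suc i, b) \<in> X"
  using dyn_fire[OF assms] by blast

lemma init_fire: "Initially f v \<in> bc_laws W dnf \<Longrightarrow> Pos (0, FA f v) \<in> X"
proof -
  assume a: "Initially f v \<in> bc_laws W dnf"
  let ?r = "\<lparr>rhead = {Pos (0, FA f v)}, rpos = {}, rnaf = {}\<rparr>
     :: ((('v,'p) fluent, 'd fval, 't) tatom) rule"
  have rP: "?r \<in> P_bc l W dnf" using law_in_P[OF a] by auto
  have "rhead ?r \<inter> X \<noteq> {}" using closed[OF rP] by auto
  then show ?thesis by auto
qed

lemma exists_val: "f \<in> bc_fluents W \<Longrightarrow> i \<le> l \<Longrightarrow> \<exists>v\<in>bc_dom W f. Pos (i, FA f v) \<in> X"
proof -
  assume a: "f \<in> bc_fluents W" "i \<le> l"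
  let ?r = "\<lparr>rhead = {}, rpos = {}, rnaf = (\<lambda>v. Pos (i, FA f v)) ` bc_dom W f\<rparr>
     :: ((('v,'p) fluent, 'd fval, 't) tatom) rule"
  have rP: "?r \<in> P_bc l W dnf" using a unfolding P_bc_def P_l_def by blast
  have "\<not> rnaf ?r \<inter> X = {}" using closed[OF rP] by auto
  then show ?thesis by auto
qed

lemma pos_FA: "Pos (i, FA f v) \<in> X \<Longrightarrow> f \<in> bc_fluents W \<and> v \<in> bc_dom W f \<and> i \<le> l"
  using support heads_FA[OF wf] by blast

lemma unique: "Pos (i, FA f v) \<in> X \<Longrightarrow> Pos (i, FA f w) \<in> X \<Longrightarrow> v = w"
proof (rule ccontr)
  assume a: "Pos (i, FA f v) \<in> X" "Pos (i, FA f w) \<in> X" "v \<noteq> w"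
  let ?r = "\<lparr>rhead = {NegC (i, FA f v)}, rpos = {Pos (i, FA f w)}, rnaf = {}\<rparr>
     :: ((('v,'p) fluent, 'd fval, 't) tatom) rule"
  have rP: "?r \<in> P_bc l W dnf" using a pos_FA[OF a(1)] pos_FA[OF a(2)]
    unfolding P_bc_def P_l_def by blast
  have "rhead ?r \<inter> X \<noteq> {}" using closed[OF rP] a by auto
  then show False using cons a by auto
qed

lemma sigma_eq: "Pos (i, FA f v) \<in> X \<Longrightarrow> sigma i X f = v"
  unfolding sigma_def using unique by blast

lemma pos_AA: assumes a: "Pos (i, AA a) \<in> X" shows "a \<in> trans W \<and> i < l"
proof -
  from support[OF a] obtain r where "r \<in> P_bc l W dnf" "Pos (i, AA a) \<in> rhead r" by blast
  then show ?thesis by (rule heads_AA)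
qed

lemma act_unique: "Pos (i, AA a) \<in> X \<Longrightarrow> Pos (i, AA b) \<in> X \<Longrightarrow> a = b"
proof (rule ccontr)
  assume a: "Pos (i, AA a) \<in> X" "Pos (i, AA b) \<in> X" "a \<noteq> b"
  have "Dynamic None [AA a, AA b] [] \<in> bc_laws W dnf"
    using a pos_AA[OF a(1)] pos_AA[OF a(2)] unfolding bc_laws_def by blast
  from dyn_constraint[OF this] a pos_AA[OF a(1)] show False by auto
qed

lemma tau_eq: assumes a: "Pos (i, AA a) \<in> X" shows "tau X i = a"
  unfolding tau_def
proof (rule the_equality)
  show "Pos (i, AA a) \<in> X" by (rule a)
  fix b assume "Pos (i, AA b) \<in> X" then show "b = a" using act_unique a by blast
qed

lemma act_exists: assumes "i < l" shows "Pos (i, AA (tau X i)) \<in> X"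
proof -
  have "TransF \<in> bc_fluents W" by (simp add: bc_fluents_def)
  from exists_val[OF this, of "Suc i"] assms obtain v where v: "Pos (Suc i, FA TransF v) \<in> X" by auto
  from support[OF v] obtain r where r: "r \<in> P_bc l W dnf" "rpos r \<subseteq> X" "Pos (Suc i, FA TransF v) \<in> rhead r"
    by blast
  from heads_FA[OF wf r(1) r(3)] have "\<exists>t. rpos r = {Pos (i, AA t)}" by blast
  then obtain t where "rpos r = {Pos (i, AA t)}" by blast
  with r(2) have "Pos (i, AA t) \<in> X" by auto
  then show ?thesis using tau_eq by simp
qed

lemma frame:
  assumes "Pos (Suc i, FA f v) \<in> X" "Pos (i, AA t) \<in> X" "\<not> eff W t f v" "f \<noteq> TransF"
  shows "Pos (i, FA f v) \<in> X"
proof -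
  from support[OF assms(1)] obtain r where r: "r \<in> P_bc l W dnf" "rpos r \<subseteq> X" "Pos (Suc i, FA f v) \<in> rhead r"
    by blast
  from heads_FA[OF wf r(1) r(3)] have
    "rpos r = {Pos (i, FA f v)} \<or> (\<exists>t'. rpos r = {Pos (i, AA t')} \<and> eff W t' f v)" by auto
  then show ?thesis
  proof
    assume "rpos r = {Pos (i, FA f v)}" then show ?thesis using r by auto
  next
    assume "\<exists>t'. rpos r = {Pos (i, AA t')} \<and> eff W t' f v"
    then obtain t' where "rpos r = {Pos (i, AA t')}" "eff W t' f v" by blast
    with r(2) act_unique assms(2,3) show ?thesis by auto
  qed
qed

lemma M_eq: "Pos (i, FA (PlaceF p) w) \<in> X \<Longrightarrow> fst (Phi_inv W X i) p = (if w = BTrue then 1 else 0)"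
  by (simp add: Phi_inv_def sigma_eq)

lemma eta_eq: "Pos (i, FA (VarF x) w) \<in> X \<Longrightarrow>
   snd (Phi_inv W X i) x = (case w of DVal d \<Rightarrow> Some d | _ \<Rightarrow> None)"
proof -
  assume a: "Pos (i, FA (VarF x) w) \<in> X"
  then have "x \<in> vars_of W" using pos_FA[OF a] by (auto simp: bc_fluents_def)
  then show ?thesis using a by (simp add: Phi_inv_def sigma_eq)
qed

lemma eta_notvar: "x \<notin> vars_of W \<Longrightarrow> snd (Phi_inv W X i) x = None"
  by (simp add: Phi_inv_def)

lemma eta_val: assumes "i \<le> l" "x \<in> vars_of W"
  shows "\<exists>w\<in>bc_dom W (VarF x). Pos (i, FA (VarF x) w) \<in> X \<and>
     snd (Phi_inv W X i) x = (case w of DVal d \<Rightarrow> Some d | _ \<Rightarrow> None)"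
proof -
  have "VarF x \<in> bc_fluents W" using assms by (simp add: bc_fluents_def)
  from exists_val[OF this assms(1)] obtain w where "w \<in> bc_dom W (VarF x)" "Pos (i, FA (VarF x) w) \<in> X" by blast
  then show ?thesis using eta_eq by blast
qed

lemma eta_some: assumes "i \<le> l" "snd (Phi_inv W X i) x = Some d"
  shows "x \<in> vars_of W \<and> Pos (i, FA (VarF x) (DVal d)) \<in> X \<and> d \<in> adm W x"
proof -
  have x: "x \<in> vars_of W" using assms(2) eta_notvar by fastforce
  from eta_val[OF assms(1) x] obtain w where "w \<in> bc_dom W (VarF x)" "Pos (i, FA (VarF x) w) \<in> X"
    "snd (Phi_inv W X i) x = (case w of DVal d \<Rightarrow> Some d | _ \<Rightarrow> None)" by blast
  with assms(2) x show ?thesis by (cases w) auto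
qed

lemma eta_none: assumes "i \<le> l" "x \<in> vars_of W" "snd (Phi_inv W X i) x = None"
  shows "Pos (i, FA (VarF x) Null) \<in> X"
proof -
  from eta_val[OF assms(1,2)] obtain w where "w \<in> bc_dom W (VarF x)" "Pos (i, FA (VarF x) w) \<in> X"
    "snd (Phi_inv W X i) x = (case w of DVal d \<Rightarrow> Some d | _ \<Rightarrow> None)" by blast
  with assms(3) show ?thesis by (cases w) auto
qed

end



context SM begin

lemma act: assumes "i < l" shows "Pos (i, AA (tau X i)) \<in> X" "tau X i \<in> trans W"
  using act_exists[OF assms] pos_AA[OF act_exists[OF assms]] by auto

lemma places_pp: "t \<in> trans W \<Longrightarrow> p \<in> preset W t \<or> p \<in> postset W t \<Longrightarrow> p \<in> places W"
  using wf unfolding wf_dawnet_def preset_def postset_def by auto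

lemma pre_true: assumes "i < l" "p \<in> preset W (tau X i)" shows "Pos (i, FA (PlaceF p) BTrue) \<in> X"
proof -
  note a = act[OF assms(1)]
  have pl: "p \<in> places W" using places_pp a(2) assms(2) by blast
  have "PlaceF p \<in> bc_fluents W" using pl by (simp add: bc_fluents_def)
  from exists_val[OF this, of i] assms(1) have "\<exists>v\<in>{BTrue, BFalse}. Pos (i, FA (PlaceF p) v) \<in> X"
    by simp
  then obtain v where v: "v \<in> {BTrue, BFalse}" "Pos (i, FA (PlaceF p) v) \<in> X" by blast
  have "v \<noteq> BFalse"
  proof
    assume "v = BFalse"
    from dyn_constraint[OF L1[OF a(2) assms(2)] assms(1)] a(1) v(2) \<open>v = BFalse\<close> show False by auto
  qed
  with v show ?thesis by auto
qed

lemma M_01: "fst (Phi_inv W X i) p \<in> {0,1}" by (simp add: Phi_inv_def)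

lemma is_asg: assumes "i \<le> l" shows "is_assignment (dmod W) (snd (Phi_inv W X i))"
  unfolding is_assignment_def
proof (intro conjI allI impI subsetI)
  fix x assume "x \<in> dom (snd (Phi_inv W X i))"
  then obtain d where "snd (Phi_inv W X i) x = Some d" by auto
  from eta_some[OF assms this] have "x \<in> vars_of W" by blast
  then show "x \<in> DV (dmod W)" using wf unfolding wf_dawnet_def vars_of_def by blast
next
  fix x c assume "snd (Phi_inv W X i) x = Some c"
  from eta_some[OF assms this] have "c \<in> adm W x" by blast
  then obtain t S where "t \<in> trans W" "wr W t x = Some S" "c \<in> S" unfolding adm_def
    by (auto split: option.splits)
  then show "c \<in> dm (dmod W) x" using wf unfolding wf_dawnet_def by blast
qed

lemma guard: assumes "i < l" shows "holds (dmod W) (snd (Phi_inv W X i)) (gd W (tau X i))"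
proof (rule ccontr)
  let ?t = "tau X i" and ?e = "snd (Phi_inv W X i)"
  assume ng: "\<not> holds (dmod W) ?e (gd W ?t)"
  note a = act[OF assms]
  have asg: "is_assignment (dmod W) ?e" using is_asg assms by simp
  have gv: "\<not> guard_valid (dmod W) (gd W ?t)" using ng asg unfolding guard_valid_def by blast
  have ad1: "\<forall>c\<in>set (dnf ?t). \<forall>x\<in>set c. fst x \<in> vars_of W"
    and ad2: "(\<not> holds (dmod W) ?e (gd W ?t)) \<longleftrightarrow> (\<exists>c\<in>set (dnf ?t). \<forall>x\<in>set c. dnf_term_holds ?e x)"
    using admd a(2) gv asg unfolding admissible_dnf_def by blast+
  from ad2 ng obtain c where c: "c \<in> set (dnf ?t)" "\<forall>x\<in>set c. dnf_term_holds ?e x" by blast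
  have "\<forall>b\<in>set (AA ?t # map enc_term c). Pos (i, b) \<in> X"
  proof
    fix b :: "(('v,'p) fluent, 'd fval, 't) bcatom" assume "b \<in> set (AA ?t # map enc_term c)"
    then consider "b = AA ?t" | x where "x \<in> set c" "b = enc_term x" by auto
    then show "Pos (i, b) \<in> X"
    proof cases
      case 1 then show ?thesis using a by simp
    next
      case 2
      obtain v oo where x: "x = (v, oo)" by (cases x)
      show ?thesis
      proof (cases oo)
        case None
        have "?e v = None" using c(2) 2 x None by fastforce
        moreover have "v \<in> vars_of W" using ad1 c(1) 2 x by fastforce
        ultimately show ?thesis using eta_none[of i v] assms 2 x None by simp
      next
        case (Some d)
        have "?e v = Some d" using c(2) 2 x Some by fastforce
        then show ?thesis using eta_some[of i v d] assms 2 x Some by simp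
      qed
    qed
  qed
  from dyn_constraint[OF L10[where dnf=dnf, OF a(2) gv c(1)] assms this] show False by simp
qed

lemma mark_pre: assumes "i < l" "p \<in> preset W (tau X i) - postset W (tau X i)"
  shows "fst (Phi_inv W X (Suc i)) p = 0" "fst (Phi_inv W X i) p = 1"
proof -
  note a = act[OF assms(1)]
  from dyn_fire[OF L3[OF a(2) assms(2)] assms(1)] a(1)
  have "Pos (Suc i, FA (PlaceF p) BFalse) \<in> X" by simp
  then show "fst (Phi_inv W X (Suc i)) p = 0" using M_eq by simp
  have "p \<in> preset W (tau X i)" using assms(2) by simp
  from M_eq[OF pre_true[OF assms(1) this]] show "fst (Phi_inv W X i) p = 1" by simp
qed

lemma mark_post: assumes "i < l" "p \<in> postset W (tau X i) - preset W (tau X i)"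
  shows "fst (Phi_inv W X (Suc i)) p = 1"
proof -
  note a = act[OF assms(1)]
  from dyn_fire[OF L4[OF a(2) assms(2)] assms(1)] a(1)
  have "Pos (Suc i, FA (PlaceF p) BTrue) \<in> X" by simp
  then show ?thesis using M_eq by simp
qed

lemma mark_other: assumes "i < l" "p \<in> places W" "p \<notin> preset W (tau X i) - postset W (tau X i)"
   "p \<notin> postset W (tau X i) - preset W (tau X i)"
  shows "fst (Phi_inv W X (Suc i)) p = fst (Phi_inv W X i) p"
proof -
  note a = act[OF assms(1)]
  have "PlaceF p \<in> bc_fluents W" using assms(2) by (simp add: bc_fluents_def)
  from exists_val[OF this, of "Suc i"] assms(1) obtain v where v: "Pos (Suc i, FA (PlaceF p) v) \<in> X"
    by auto
  have "\<not> eff W (tau X i) (PlaceF p) v" using assms(3,4) by (auto simp: eff_def)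
  from frame[OF v a(1) this] have "Pos (i, FA (PlaceF p) v) \<in> X" by simp
  then show ?thesis using M_eq v by simp
qed

lemma data_some: assumes "i < l" "wr W (tau X i) x = Some S" "S \<noteq> {}"
  shows "\<exists>d\<in>S. snd (Phi_inv W X (Suc i)) x = Some d"
proof -
  note a = act[OF assms(1)]
  have x: "x \<in> vars_of W" using a(2) assms(2) unfolding vars_of_def by blast
  have sl: "Suc i \<le> l" using assms(1) by simp
  from eta_val[OF sl x] obtain w where w: "w \<in> bc_dom W (VarF x)"
    "Pos (Suc i, FA (VarF x) w) \<in> X"
    "snd (Phi_inv W X (Suc i)) x = (case w of DVal d \<Rightarrow> Some d | _ \<Rightarrow> None)" by blast
  have "w \<in> DVal ` S"
  proof (rule ccontr)
    assume "w \<notin> DVal ` S"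
    with w(1) have "w \<in> {Null} \<union> DVal ` (adm W x - S)" by auto
    from dyn_constraint[OF L6[OF a(2) assms(2,3) this] assms(1)] a(1)
    have "NegC (Suc i, FA (VarF x) w) \<in> X" by simp
    with w(2) cons show False by blast
  qed
  with w(3) show ?thesis by auto
qed

lemma data_empty: assumes "i < l" "wr W (tau X i) x = Some {}"
  shows "snd (Phi_inv W X (Suc i)) x = None"
proof -
  note a = act[OF assms(1)]
  from dyn_fire[OF L5[OF a(2) assms(2)] assms(1)] a(1)
  have "Pos (Suc i, FA (VarF x) Null) \<in> X" by simp
  then show ?thesis using eta_eq by simp
qed

lemma data_none: assumes "i < l" "wr W (tau X i) x = None"
  shows "snd (Phi_inv W X (Suc i)) x = snd (Phi_inv W X i) x"
proof (cases "x \<in> vars_of W")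
  case False then show ?thesis using eta_notvar by simp
next
  case True
  note a = act[OF assms(1)]
  have sl: "Suc i \<le> l" using assms(1) by simp
  from eta_val[OF sl True] obtain w where w:
    "Pos (Suc i, FA (VarF x) w) \<in> X" by blast
  have "\<not> eff W (tau X i) (VarF x) w" using assms(2) by (auto simp: eff_def)
  from frame[OF w a(1) this] have "Pos (i, FA (VarF x) w) \<in> X" by simp
  then show ?thesis using eta_eq w by simp
qed

lemma step_gen: assumes "i < l"
  shows "valid_firing W (Phi_inv W X i) (tau X i)
           (nextM W (tau X i) (fst (Phi_inv W X i)), snd (Phi_inv W X (Suc i)))"
proof -
  let ?t = "tau X i" and ?e = "snd (Phi_inv W X i)" and ?e' = "snd (Phi_inv W X (Suc i))"
    and ?M = "fst (Phi_inv W X i)"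
  note a = act[OF assms(1)]
  have pre: "preset W ?t \<subseteq> {p. ?M p > 0}"
  proof
    fix p assume "p \<in> preset W ?t"
    from M_eq[OF pre_true[OF assms this]] show "p \<in> {p. ?M p > 0}" by simp
  qed
  have dm: "dom ?e' = (dom ?e \<union> {v. \<exists>S. wr W ?t v = Some S \<and> S \<noteq> {}}) - {v. wr W ?t v = Some {}}"
  proof (rule set_eqI)
    fix x show "x \<in> dom ?e' \<longleftrightarrow> x \<in> (dom ?e \<union> {v. \<exists>S. wr W ?t v = Some S \<and> S \<noteq> {}}) - {v. wr W ?t v = Some {}}"
    proof (cases "wr W ?t x")
      case None then show ?thesis using data_none[OF assms] by auto
    next
      case (Some S)
      show ?thesis
      proof (cases "S = {}")
        case True then show ?thesis using Some data_empty[OF assms] by auto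
      next
        case False then show ?thesis using Some data_some[OF assms Some] by auto
      qed
    qed
  qed
  have ds: "\<forall>v S. wr W ?t v = Some S \<and> S \<noteq> {} \<longrightarrow> (\<exists>d\<in>S. ?e' v = Some d)"
    using data_some[OF assms] by blast
  have dn: "\<forall>v. wr W ?t v = None \<longrightarrow> ?e' v = ?e v" using data_none[OF assms] by blast
  have "valid_firing W (?M, ?e) ?t (nextM W ?t ?M, ?e')"
    unfolding valid_firing_def prod.case using a(2) pre guard[OF assms] dm ds dn
    by (simp add: nextM_def)
  then show ?thesis by simp
qed

lemma full_step: assumes "i < l" "\<forall>p\<in>postset W (tau X i) - preset W (tau X i). fst (Phi_inv W X i) p = 0"
  shows "valid_firing W (Phi_inv W X i) (tau X i) (Phi_inv W X (Suc i))"
proof -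
  have eq: "\<forall>p\<in>places W. fst (Phi_inv W X i) p = fst (Phi_inv W X i) p \<and>
     nextM W (tau X i) (fst (Phi_inv W X i)) p = fst (Phi_inv W X (Suc i)) p"
    using mark_pre[OF assms(1)] mark_post[OF assms(1)] mark_other[OF assms(1)] assms(2)
    by (auto simp: nextM_def)
  have v: "valid_firing W (fst (Phi_inv W X i), snd (Phi_inv W X i)) (tau X i)
      (nextM W (tau X i) (fst (Phi_inv W X i)), snd (Phi_inv W X (Suc i)))"
    using step_gen[OF assms(1)] by simp
  have "valid_firing W (fst (Phi_inv W X i), snd (Phi_inv W X i)) (tau X i)
      (fst (Phi_inv W X (Suc i)), snd (Phi_inv W X (Suc i)))"
    using vf_cong[OF wf v eq] .
  then show ?thesis by simp
qed

lemma post_zero: assumes "i < l" "reachable W (nm W (fst (Phi_inv W X i)), snd (Phi_inv W X i))"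
  "p \<in> postset W (tau X i) - preset W (tau X i)"
  shows "fst (Phi_inv W X i) p = 0"
proof (rule ccontr)
  assume n0: "fst (Phi_inv W X i) p \<noteq> 0"
  then have one: "fst (Phi_inv W X i) p = 1" using M_01[of i p] by auto
  note a = act[OF assms(1)]
  have pl: "p \<in> places W" using places_pp a(2) assms(3) by blast
  have eq: "\<forall>q\<in>places W. fst (Phi_inv W X i) q = nm W (fst (Phi_inv W X i)) q \<and>
     nextM W (tau X i) (fst (Phi_inv W X i)) q = nm W (nextM W (tau X i) (fst (Phi_inv W X i))) q"
    by (simp add: nm_def)
  have "valid_firing W (fst (Phi_inv W X i), snd (Phi_inv W X i)) (tau X i)
     (nextM W (tau X i) (fst (Phi_inv W X i)), snd (Phi_inv W X (Suc i)))"
    using step_gen[OF assms(1)] by simp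
  from vf_cong[OF wf this eq] have "valid_firing W (nm W (fst (Phi_inv W X i)), snd (Phi_inv W X i)) (tau X i)
     (nm W (nextM W (tau X i) (fst (Phi_inv W X i))), snd (Phi_inv W X (Suc i)))" .
  from reachable.step[OF assms(2) this] os pl
  have "nm W (nextM W (tau X i) (fst (Phi_inv W X i))) p \<le> 1" unfolding one_safe_def by blast
  then show False using one pl assms(3) by (simp add: nm_def nextM_def)
qed

lemma init_eq: "(nm W (fst (Phi_inv W X 0)), snd (Phi_inv W X 0)) = initial_config W"
proof -
  have st: "start W \<in> places W" using wf unfolding wf_dawnet_def by auto
  have m: "nm W (fst (Phi_inv W X 0)) = (\<lambda>p. if p = start W then 1 else 0)"
  proof
    fix p show "nm W (fst (Phi_inv W X 0)) p = (if p = start W then 1 else 0)"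
    proof (cases "p \<in> places W")
      case False then show ?thesis using st by (auto simp: nm_def)
    next
      case True
      show ?thesis
      proof (cases "p = start W")
        case True then show ?thesis using init_fire[OF L7] M_eq st by (simp add: nm_def)
      next
        case False then show ?thesis using init_fire[OF L8[OF \<open>p \<in> places W\<close> False]] M_eq
            \<open>p \<in> places W\<close> by (simp add: nm_def)
      qed
    qed
  qed
  have e: "snd (Phi_inv W X 0) = Map.empty"
  proof
    fix x show "snd (Phi_inv W X 0) x = None"
    proof (cases "x \<in> vars_of W")
      case True then show ?thesis using init_fire[OF L9[OF True]] eta_eq by simp
    next
      case False then show ?thesis using eta_notvar by simp
    qed
  qed
  show ?thesis using m e by (simp add: initial_config_def)
qed

lemma reach: "i \<le> l \<Longrightarrow> reachable W (nm W (fst (Phi_inv W X i)), snd (Phi_inv W X i))"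
proof (induction i)
  case 0 then show ?case using init_eq reachable.init by simp
next
  case (Suc i)
  then have il: "i < l" by simp
  with Suc have r: "reachable W (nm W (fst (Phi_inv W X i)), snd (Phi_inv W X i))" by simp
  from full_step[OF il] post_zero[OF il r]
  have v: "valid_firing W (fst (Phi_inv W X i), snd (Phi_inv W X i)) (tau X i)
     (fst (Phi_inv W X (Suc i)), snd (Phi_inv W X (Suc i)))" by simp
  have eq: "\<forall>q\<in>places W. fst (Phi_inv W X i) q = nm W (fst (Phi_inv W X i)) q \<and>
     fst (Phi_inv W X (Suc i)) q = nm W (fst (Phi_inv W X (Suc i))) q"
    by (simp add: nm_def)
  from reachable.step[OF r vf_cong[OF wf v eq]] show ?case .
qed

end

theorem mainTheorem6:
  fixes W :: "('v,'d,'p,'t) dawnet"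
    and dnf :: "'t \<Rightarrow> ('v,'d) dnf_term list list"
    and l :: nat
    and X :: "((('v,'p) fluent, 'd fval, 't) tatom) lit set"
  assumes "wf_dawnet W"
    and "one_safe W"
    and "admissible_dnf W dnf"
    and "stable_model (P_bc l W dnf) X"
  shows "\<forall>i<l. valid_firing W (Phi_inv W X i) (tau X i) (Phi_inv W X (Suc i))"
proof -
  interpret SM W dnf l X using assms by (unfold_locales) auto
  show ?thesis
  proof (intro allI impI)
    fix i assume il: "i < l"
    have r: "reachable W (nm W (fst (Phi_inv W X i)), snd (Phi_inv W X i))" using reach il by simp
    show "valid_firing W (Phi_inv W X i) (tau X i) (Phi_inv W X (Suc i))"
      using full_step[OF il] post_zero[OF il r] by blast
  qed
qed


end
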